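(* Let $n\ge3$ and let $L^B$ be a blow-up of $L\cong\mathbf{2}^n$ with atoms $q_1,\dots,q_n$ such that $|[q_i]|\ge2$ for every $1\le i\le n$. Then $G(L^B)^{**}=G(L^B)_{SR}$ (same vertex set and same edges).
   Context: Blow-up: for $L\cong\mathbf{2}^n$ with atoms $q_1,\dots,q_n$, replace each $a\in L\setminus\{0,1\}$ by a finite chain $C_a$: $a=a^1\lessdot\cdots\lessdot a^{k_a}$ ($k_a\ge1$), keep $0,1$; elements of one chain are ordered along it, and for $u\in C_a,v\in C_b$ with $a\ne b$ ($C_0=\{0\},C_1=\{1\}$), $u\le v$ iff $a<b$ in $L$. $G(L^B)$ is the zero-divisor graph of $L^B$ (vertices: nonzero elements with a nonzero element meeting them in $0$; adjacency: meet $=0$). For $x\in L^B$, $x^\perp=\{z:x\wedge z=0\}$, $[x]=\{y:y^\perp=x^\perp\}$ (so $[q_i]=C_{q_i}$), classes ordered by $[a]\le[b]$ iff $b^\perp\subseteq a^\perp$, $[a]\wedge[b]=[a\wedge b]$. $G(L^B)^{**}$: vertex set $V(G(L^B))$, distinct $x,y$ adjacent iff $[x]=[y]$, or $[x]\wedge[y]\ne[0]$ with $[x],[y]$ incomparable. In a graph $G$, $u$ is maximally distant from $v$ if $d(v,w)\le d(u,v)$ for all neighbours $w$ of $u$; $u,v$ are mutually maximally distant if each is maximally distant from the other. The boundary $\partial(G)$ is the set of vertices $u$ for which some $v$ is mutually maximally distant with $u$. The strong resolving graph $G_{SR}$ has vertex set $\partial(G)$, distinct $u,v$ adjacent iff they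 are mutually maximally distant in $G$. *)

theory Defs
  imports Main "HOL-Library.Extended_Nat"
begin

text \<open>L = 2^n is modelled as Pow {..<n}, atoms q_i = {i} (i < n).
  The blow-up replaces each a with {} \<noteq> a \<noteq> {..<n} by a chain
  a^1 < ... < a^(k a); elements of L^B are pairs (a, j) meaning a^j.
  0 = ({},1), 1 = ({..<n},1).\<close>

definition blowup_ok :: "nat \<Rightarrow> (nat set \<Rightarrow> nat) \<Rightarrow> bool" where
  "blowup_ok n k \<longleftrightarrow> (\<forall>a. a \<subseteq> {..<n} \<and> a \<noteq> {} \<and> a \<noteq> {..<n} \<longrightarrow> 1 \<le> k a)"

definition LB :: "nat \<Rightarrow> (nat set \<Rightarrow> nat) \<Rightarrow> (nat set \<times> nat) set" where
  "LB n k = {(a, j). a \<subseteq> {..<n} \<and>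
      (if a = {} \<or> a = {..<n} then j = 1 else 1 \<le> j \<and> j \<le> k a)}"

definition leB :: "nat set \<times> nat \<Rightarrow> nat set \<times> nat \<Rightarrow> bool" where
  "leB x y \<longleftrightarrow> (fst x = fst y \<and> snd x \<le> snd y) \<or> fst x \<subset> fst y"

definition botB :: "nat set \<times> nat" where
  "botB = ({}, 1)"

definition meetB :: "nat \<Rightarrow> (nat set \<Rightarrow> nat) \<Rightarrow> nat set \<times> nat \<Rightarrow> nat set \<times> nat \<Rightarrow> nat set \<times> nat" where
  "meetB n k x y = (THE m. m \<in> LB n k \<and> leB m x \<and> leB m y \<and>
      (\<forall>w\<in>LB n k. leB w x \<and> leB w y \<longrightarrow> leB w m))"

definition perpB :: "nat \<Rightarrow> (nat set \<Rightarrow> nat) \<Rightarrow> nat set \<times> nat \<Rightarrow> (nat set \<times> nat) set" where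
  "perpB n k x = {z \<in> LB n k. meetB n k x z = botB}"

definition clsB :: "nat \<Rightarrow> (nat set \<Rightarrow> nat) \<Rightarrow> nat set \<times> nat \<Rightarrow> (nat set \<times> nat) set" where
  "clsB n k x = {y \<in> LB n k. perpB n k y = perpB n k x}"

definition cls_le :: "nat \<Rightarrow> (nat set \<Rightarrow> nat) \<Rightarrow> nat set \<times> nat \<Rightarrow> nat set \<times> nat \<Rightarrow> bool" where
  "cls_le n k a b \<longleftrightarrow> perpB n k b \<subseteq> perpB n k a"

definition ZV :: "nat \<Rightarrow> (nat set \<Rightarrow> nat) \<Rightarrow> (nat set \<times> nat) set" where
  "ZV n k = {x \<in> LB n k. x \<noteq> botB \<and>
      (\<exists>z\<in>LB n k. z \<noteq> botB \<and> meetB n k x z = botB)}"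

definition ZE :: "nat \<Rightarrow> (nat set \<Rightarrow> nat) \<Rightarrow> nat set \<times> nat \<Rightarrow> nat set \<times> nat \<Rightarrow> bool" where
  "ZE n k x y \<longleftrightarrow> x \<in> ZV n k \<and> y \<in> ZV n k \<and> x \<noteq> y \<and> meetB n k x y = botB"

definition SSE :: "nat \<Rightarrow> (nat set \<Rightarrow> nat) \<Rightarrow> nat set \<times> nat \<Rightarrow> nat set \<times> nat \<Rightarrow> bool" where
  "SSE n k x y \<longleftrightarrow> x \<in> ZV n k \<and> y \<in> ZV n k \<and> x \<noteq> y \<and>
     (clsB n k x = clsB n k y \<or>
      (clsB n k (meetB n k x y) \<noteq> clsB n k botB \<and>
       \<not> cls_le n k x y \<and> \<not> cls_le n k y x))"

inductive walk_len :: "'a set \<Rightarrow> ('a \<Rightarrow> 'a \<Rightarrow> bool) \<Rightarrow> 'a \<Rightarrow> 'a \<Rightarrow> nat \<Rightarrow> bool"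
  for V E where
  wl_nil: "u \<in> V \<Longrightarrow> walk_len V E u u 0"
| wl_cons: "u \<in> V \<Longrightarrow> E u w \<Longrightarrow> walk_len V E w v m \<Longrightarrow> walk_len V E u v (Suc m)"

definition gdist :: "'a set \<Rightarrow> ('a \<Rightarrow> 'a \<Rightarrow> bool) \<Rightarrow> 'a \<Rightarrow> 'a \<Rightarrow> enat" where
  "gdist V E u v = (if \<exists>m. walk_len V E u v m
      then enat (LEAST m. walk_len V E u v m) else \<infinity>)"

definition max_distant :: "'a set \<Rightarrow> ('a \<Rightarrow> 'a \<Rightarrow> bool) \<Rightarrow> 'a \<Rightarrow> 'a \<Rightarrow> bool" where
  "max_distant V E u v \<longleftrightarrow>
     (\<forall>w\<in>V. E u w \<longrightarrow> gdist V E v w \<le> gdist V E u v)"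

definition mutually_max_distant :: "'a set \<Rightarrow> ('a \<Rightarrow> 'a \<Rightarrow> bool) \<Rightarrow> 'a \<Rightarrow> 'a \<Rightarrow> bool" where
  "mutually_max_distant V E u v \<longleftrightarrow> max_distant V E u v \<and> max_distant V E v u"

definition boundary :: "'a set \<Rightarrow> ('a \<Rightarrow> 'a \<Rightarrow> bool) \<Rightarrow> 'a set" where
  "boundary V E = {u \<in> V. \<exists>v\<in>V. mutually_max_distant V E u v}"

definition SR_edge :: "'a set \<Rightarrow> ('a \<Rightarrow> 'a \<Rightarrow> bool) \<Rightarrow> 'a \<Rightarrow> 'a \<Rightarrow> bool" where
  "SR_edge V E u v \<longleftrightarrow> u \<in> boundary V E \<and> v \<in> boundary V E \<and> u \<noteq> v \<and>
     mutually_max_distant V E u v"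

end

theory Submission
  imports Defs
begin

locale BU =
  fixes n :: nat and k :: "nat set \<Rightarrow> nat"
  assumes n3: "3 \<le> n" and bk: "blowup_ok n k"
    and cl2: "\<forall>i<n. card (clsB n k ({i}, 1)) \<ge> 2"
begin

lemma LB_iff: "(a,j) \<in> LB n k \<longleftrightarrow> a \<subseteq> {..<n} \<and> (if a={} \<or> a={..<n} then j=1 else 1\<le>j \<and> j\<le>k a)"
  by (simp add: LB_def)

lemma LB_mem: "a \<subseteq> {..<n} \<Longrightarrow> (a,1) \<in> LB n k"
  using bk by (auto simp: LB_def blowup_ok_def)

lemma LB_snd: "x \<in> LB n k \<Longrightarrow> 1 \<le> snd x"
  by (cases x) (auto simp: LB_def split: if_splits)

lemma LB_sub: "x \<in> LB n k \<Longrightarrow> fst x \<subseteq> {..<n}"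
  by (cases x) (auto simp: LB_def split: if_splits)

lemma LB_bot: "x \<in> LB n k \<Longrightarrow> fst x = {} \<Longrightarrow> x = botB"
  by (cases x) (auto simp: LB_def botB_def split: if_splits)

lemma bot_LB: "botB \<in> LB n k"
  by (simp add: botB_def LB_def)

definition P where "P m x y \<longleftrightarrow> m \<in> LB n k \<and> leB m x \<and> leB m y \<and>
      (\<forall>w\<in>LB n k. leB w x \<and> leB w y \<longrightarrow> leB w m)"

lemma leB_antisym: "leB x y \<Longrightarrow> leB y x \<Longrightarrow> x = y"
  by (cases x; cases y) (auto simp: leB_def)

lemma leB_fst: "leB x y \<Longrightarrow> fst x \<subseteq> fst y"
  by (auto simp: leB_def)

lemma glb_ex:
  assumes x: "x \<in> LB n k" and y: "y \<in> LB n k" shows "\<exists>m. P m x y"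
proof -
  obtain a i where xa: "x = (a,i)" by (cases x)
  obtain b j where yb: "y = (b,j)" by (cases y)
  show ?thesis
  proof (cases "a = b")
    case True
    have "P (a, min i j) x y"
      using x y unfolding xa yb True P_def by (auto simp: LB_def leB_def split: if_splits)
    then show ?thesis by blast
  next
    case ne: False
    show ?thesis
    proof (cases "a \<subset> b")
      case True
      have "P x x y" using x y True unfolding xa yb P_def by (auto simp: leB_def)
      then show ?thesis by blast
    next
      case nab: False
      show ?thesis
      proof (cases "b \<subset> a")
        case True
        have "P y x y" using x y True unfolding xa yb P_def by (auto simp: leB_def)
        then show ?thesis by blast
      next
        case nba: False
        define c where "c = a \<inter> b"
        have ca: "c \<subset> a" and cb: "c \<subset> b" using ne nab nba unfolding c_def by auto
        have an: "a \<subseteq> {..<n}" using LB_sub[OF x] xa by simp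
        show ?thesis
        proof (cases "c = {}")
          case True
          have "P ({},1) x y" unfolding P_def
          proof (intro conjI ballI impI)
            show "({}, 1) \<in> LB n k" by (simp add: LB_def)
            show "leB ({}, 1) x" "leB ({}, 1) y" using ca cb True unfolding xa yb leB_def by auto
          next
            fix w assume w: "w \<in> LB n k" "leB w x \<and> leB w y"
            then have "fst w \<subseteq> c" unfolding c_def xa yb using leB_fst by fastforce
            then have "fst w = {}" using True by auto
            then have "w = ({},1)" using LB_bot w(1) by (simp add: botB_def)
            then show "leB w ({}, 1)" by (simp add: leB_def)
          qed
          then show ?thesis by blast
        next
          case cne: False
          have cp: "c \<noteq> {..<n}" using ca an by auto
          have kc: "1 \<le> k c" using bk cne cp an ca unfolding blowup_ok_def by auto
          have "P (c, k c) x y" unfolding P_def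
          proof (intro conjI ballI impI)
            show "(c, k c) \<in> LB n k" using cne cp kc an ca by (auto simp: LB_def)
            show "leB (c, k c) x" "leB (c, k c) y" using ca cb unfolding xa yb leB_def by auto
          next
            fix w assume w: "w \<in> LB n k" "leB w x \<and> leB w y"
            then have ws: "fst w \<subseteq> c" unfolding c_def xa yb using leB_fst by fastforce
            show "leB w (c, k c)"
            proof (cases "fst w = c")
              case True
              then have "snd w \<le> k c" using w(1) cne cp by (cases w) (auto simp: LB_def)
              then show ?thesis using True by (simp add: leB_def)
            next
              case False then show ?thesis using ws by (auto simp: leB_def)
            qed
          qed
          then show ?thesis by blast
        qed
      qed
    qed
  qed
qed

lemma meet_P: assumes "x \<in> LB n k" "y \<in> LB n k" shows "P (meetB n k x y) x y"
proof -
  have ex: "\<exists>!m. P m x y"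
    using glb_ex[OF assms] leB_antisym unfolding P_def by blast
  show ?thesis unfolding meetB_def using theI'[OF ex[unfolded P_def]] unfolding P_def .
qed

lemma meet_LB: "x \<in> LB n k \<Longrightarrow> y \<in> LB n k \<Longrightarrow> meetB n k x y \<in> LB n k"
  using meet_P P_def by blast

lemma meet_fst: assumes x: "x \<in> LB n k" and y: "y \<in> LB n k"
  shows "fst (meetB n k x y) = fst x \<inter> fst y"
proof -
  define m where "m = meetB n k x y"
  have p: "P m x y" using meet_P[OF x y] m_def by simp
  have "fst m \<subseteq> fst x" "fst m \<subseteq> fst y" using p leB_fst unfolding P_def by auto
  moreover
  have wl: "(fst x \<inter> fst y, 1) \<in> LB n k" using LB_mem LB_sub[OF x] by (meson inf.coboundedI1)
  have "leB (fst x \<inter> fst y, 1) x" using LB_snd[OF x] by (cases x) (auto simp: leB_def)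
  moreover have "leB (fst x \<inter> fst y, 1) y" using LB_snd[OF y] by (cases y) (auto simp: leB_def)
  ultimately have "fst x \<inter> fst y \<subseteq> fst m" using p wl leB_fst unfolding P_def by fastforce
  then show ?thesis using \<open>fst m \<subseteq> fst x\<close> \<open>fst m \<subseteq> fst y\<close> m_def by auto
qed

lemma meet_bot: assumes x: "x \<in> LB n k" and y: "y \<in> LB n k"
  shows "meetB n k x y = botB \<longleftrightarrow> fst x \<inter> fst y = {}"
  using meet_fst[OF x y] LB_bot[OF meet_LB[OF x y]] by (auto simp: botB_def)


lemma perp_eq: "x \<in> LB n k \<Longrightarrow> perpB n k x = {z\<in>LB n k. fst x \<inter> fst z = {}}"
  unfolding perpB_def using meet_bot by blast

lemma sing_LB: "i < n \<Longrightarrow> ({i},1) \<in> LB n k"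
  using LB_mem by auto

lemma perp_sub_iff: assumes x: "x \<in> LB n k" and y: "y \<in> LB n k"
  shows "perpB n k y \<subseteq> perpB n k x \<longleftrightarrow> fst x \<subseteq> fst y"
proof
  assume h: "perpB n k y \<subseteq> perpB n k x"
  show "fst x \<subseteq> fst y"
  proof
    fix i assume i: "i \<in> fst x"
    then have "i < n" using LB_sub[OF x] by auto
    show "i \<in> fst y"
    proof (rule ccontr)
      assume "i \<notin> fst y"
      then have "({i},1) \<in> perpB n k y" using perp_eq[OF y] sing_LB[OF \<open>i<n\<close>] by auto
      then have "({i},1) \<in> perpB n k x" using h by auto
      then show False using perp_eq[OF x] i by auto
    qed
  qed
next
  assume "fst x \<subseteq> fst y" then show "perpB n k y \<subseteq> perpB n k x"
    using perp_eq[OF x] perp_eq[OF y] by auto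
qed

lemma cls_le_iff: "x \<in> LB n k \<Longrightarrow> y \<in> LB n k \<Longrightarrow> cls_le n k x y \<longleftrightarrow> fst x \<subseteq> fst y"
  unfolding cls_le_def using perp_sub_iff by simp

lemma perp_eq_iff: "x \<in> LB n k \<Longrightarrow> y \<in> LB n k \<Longrightarrow> perpB n k x = perpB n k y \<longleftrightarrow> fst x = fst y"
  using perp_sub_iff by blast

lemma cls_eq: assumes x: "x \<in> LB n k" and y: "y \<in> LB n k"
  shows "clsB n k x = clsB n k y \<longleftrightarrow> fst x = fst y"
proof
  assume "clsB n k x = clsB n k y"
  moreover have "x \<in> clsB n k x" using x by (simp add: clsB_def)
  ultimately have "perpB n k x = perpB n k y" by (simp add: clsB_def)
  then show "fst x = fst y" using perp_eq_iff[OF x y] by simp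
next
  assume "fst x = fst y"
  then have "perpB n k x = perpB n k y" using perp_eq_iff[OF x y] by simp
  then show "clsB n k x = clsB n k y" by (simp add: clsB_def)
qed

lemma chain2: assumes i: "i < n" shows "\<exists>j'. ({i},j') \<in> LB n k \<and> j' \<noteq> j"
proof -
  define A where "A = clsB n k ({i},1)"
  have c: "card A \<ge> 2" using cl2 i A_def by auto
  have "\<exists>z\<in>A. z \<noteq> ({i},j)"
  proof (rule ccontr)
    assume "\<not> ?thesis"
    then have "A \<subseteq> {({i},j)}" by auto
    then have "card A \<le> 1" using card_mono[of "{({i},j)}" A] by simp
    then show False using c by simp
  qed
  then obtain z where z: "z \<in> A" "z \<noteq> ({i},j)" by blast
  have zL: "z \<in> LB n k" using z(1) by (simp add: A_def clsB_def)
  have "fst z = {i}" using z(1) cls_eq[OF zL sing_LB[OF i]] unfolding A_def clsB_def by auto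
  then show ?thesis using z zL by (cases z) auto
qed

lemma ZV_iff: "x \<in> ZV n k \<longleftrightarrow> x \<in> LB n k \<and> fst x \<noteq> {} \<and> fst x \<noteq> {..<n}"
proof
  assume h: "x \<in> ZV n k"
  then have x: "x \<in> LB n k" "x \<noteq> botB" by (auto simp: ZV_def)
  then have ne: "fst x \<noteq> {}" using LB_bot by blast
  obtain z where z: "z \<in> LB n k" "z \<noteq> botB" "meetB n k x z = botB" using h by (auto simp: ZV_def)
  then have "fst x \<inter> fst z = {}" "fst z \<noteq> {}" using meet_bot[OF x(1) z(1)] LB_bot[OF z(1)] by auto
  then have "fst x \<noteq> {..<n}" using LB_sub[OF z(1)] by auto
  then show "x \<in> LB n k \<and> fst x \<noteq> {} \<and> fst x \<noteq> {..<n}" using x ne by simp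
next
  assume h: "x \<in> LB n k \<and> fst x \<noteq> {} \<and> fst x \<noteq> {..<n}"
  define z where "z = ({..<n} - fst x, 1::nat)"
  have zL: "z \<in> LB n k" unfolding z_def by (rule LB_mem) auto
  have zne: "z \<noteq> botB" using h LB_sub[of x] unfolding z_def botB_def by auto
  have "meetB n k x z = botB" using meet_bot[OF _ zL] h unfolding z_def by auto
  moreover have "x \<noteq> botB" using h by (auto simp: botB_def)
  ultimately show "x \<in> ZV n k" using h zL zne unfolding ZV_def by blast
qed

lemma ZV_LB: "x \<in> ZV n k \<Longrightarrow> x \<in> LB n k" using ZV_iff by blast

lemma ZE_iff: "ZE n k x y \<longleftrightarrow> x \<in> ZV n k \<and> y \<in> ZV n k \<and> fst x \<inter> fst y = {}"
proof -
  have "x \<in> ZV n k \<Longrightarrow> y \<in> ZV n k \<Longrightarrow> fst x \<inter> fst y = {} \<Longrightarrow> x \<noteq> y"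
    using ZV_iff by auto
  then show ?thesis unfolding ZE_def using meet_bot ZV_LB by blast
qed

definition cond where "cond x y \<longleftrightarrow> fst x = fst y \<or>
   (fst x \<inter> fst y \<noteq> {} \<and> \<not> fst x \<subseteq> fst y \<and> \<not> fst y \<subseteq> fst x)"

lemma SSE_iff: "SSE n k x y \<longleftrightarrow> x \<in> ZV n k \<and> y \<in> ZV n k \<and> x \<noteq> y \<and> cond x y"
proof -
  { assume x: "x \<in> LB n k" and y: "y \<in> LB n k"
    have "clsB n k (meetB n k x y) = clsB n k botB \<longleftrightarrow> fst x \<inter> fst y = {}"
      using cls_eq[OF meet_LB[OF x y] bot_LB] meet_fst[OF x y] by (simp add: botB_def)
    then have "(clsB n k x = clsB n k y \<or>
      (clsB n k (meetB n k x y) \<noteq> clsB n k botB \<and>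
       \<not> cls_le n k x y \<and> \<not> cls_le n k y x)) \<longleftrightarrow> cond x y"
      using cls_eq[OF x y] cls_le_iff[OF x y] cls_le_iff[OF y x] unfolding cond_def by simp }
  then show ?thesis unfolding SSE_def using ZV_LB by blast
qed


lemma walk0: "walk_len V E u v 0 \<longleftrightarrow> u \<in> V \<and> u = v"
  by (auto elim: walk_len.cases intro: walk_len.intros)

lemma walkS: "walk_len V E u v (Suc m) \<longleftrightarrow> u \<in> V \<and> (\<exists>w. E u w \<and> walk_len V E w v m)"
  by (auto elim: walk_len.cases intro: walk_len.intros)

lemma gdist_eqI: "walk_len V E u v d \<Longrightarrow> (\<forall>m<d. \<not> walk_len V E u v m) \<Longrightarrow> gdist V E u v = enat d"
  unfolding gdist_def by (auto intro!: Least_equality simp: not_less[symmetric])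

definition Dst :: "nat set \<times> nat \<Rightarrow> nat set \<times> nat \<Rightarrow> nat" where
  "Dst x y = (if x = y then 0 else if fst x \<inter> fst y = {} then 1
     else if fst x \<union> fst y = {..<n} then 3 else 2)"

lemma Dst_sym: "Dst x y = Dst y x"
  unfolding Dst_def by (auto simp: Int_commute Un_commute)

lemma compl_ZV: "x \<in> ZV n k \<Longrightarrow> ({..<n} - fst x, 1) \<in> ZV n k"
  using ZV_iff[of x] ZV_iff[of "({..<n} - fst x, 1)"] LB_mem LB_sub[of x] by auto

lemma gdist_D: assumes x: "x \<in> ZV n k" and y: "y \<in> ZV n k"
  shows "gdist (ZV n k) (ZE n k) x y = enat (Dst x y)"
proof -
  let ?W = "walk_len (ZV n k) (ZE n k)"
  have xs: "fst x \<subseteq> {..<n}" "fst x \<noteq> {}" "fst x \<noteq> {..<n}" using x ZV_iff LB_sub by auto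
  have ys: "fst y \<subseteq> {..<n}" "fst y \<noteq> {}" "fst y \<noteq> {..<n}" using y ZV_iff LB_sub by auto
  have nw0: "\<not> ?W x y 0" if "x \<noteq> y" using that by (simp add: walk0)
  have nw1: "\<not> ?W x y 1" if "fst x \<inter> fst y \<noteq> {}" using that
    by (auto simp: walkS walk0 ZE_iff)
  have nw2: "\<not> ?W x y 2" if "fst x \<union> fst y = {..<n}"
  proof
    assume "?W x y 2"
    then obtain w where "ZE n k x w" "ZE n k w y" by (auto simp: walkS walk0 numeral_2_eq_2)
    then have "fst w \<inter> (fst x \<union> fst y) = {}" "w \<in> ZV n k" by (auto simp: ZE_iff)
    then show False using that ZV_iff[of w] LB_sub[of w] by auto
  qed
  have w1: "?W x y 1" if "fst x \<inter> fst y = {}"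
  proof -
    have "ZE n k x y" using that x y by (simp add: ZE_iff)
    then show ?thesis using x y walk_len.wl_cons walk_len.wl_nil One_nat_def by metis
  qed
  have w2: "?W x y 2" if "fst x \<union> fst y \<noteq> {..<n}"
  proof -
    define c where "c = ({..<n} - (fst x \<union> fst y), 1::nat)"
    have "c \<in> ZV n k" unfolding c_def ZV_iff using that xs ys LB_mem by auto
    then have "ZE n k x c" "ZE n k c y" using x y unfolding ZE_iff c_def by auto
    then show ?thesis using x y \<open>c \<in> ZV n k\<close> walk_len.wl_cons walk_len.wl_nil numeral_2_eq_2 by metis
  qed
  have w3: "?W x y 3" if "fst x \<union> fst y = {..<n}"
  proof -
    define c where "c = ({..<n} - fst x, 1::nat)"
    define d where "d = ({..<n} - fst y, 1::nat)"
    have c: "c \<in> ZV n k" "d \<in> ZV n k" unfolding c_def d_def using compl_ZV x y by auto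
    then have "ZE n k x c" "ZE n k c d" "ZE n k d y" using x y that unfolding ZE_iff c_def d_def by auto
    then show ?thesis using x y c walk_len.wl_cons[of x "ZV n k" "ZE n k" c y 2] walk_len.wl_cons walk_len.wl_nil numeral_3_eq_3 numeral_2_eq_2 by metis
  qed
  show ?thesis
  proof (cases "x = y")
    case True then show ?thesis using x by (intro gdist_eqI) (auto simp: walk0 Dst_def)
  next
    case ne: False
    show ?thesis
    proof (cases "fst x \<inter> fst y = {}")
      case True then show ?thesis using ne w1 nw0 by (intro gdist_eqI) (auto simp: Dst_def)
    next
      case ov: False
      show ?thesis
      proof (cases "fst x \<union> fst y = {..<n}")
        case True
        have "\<forall>m<3. \<not> ?W x y m"
        proof (intro allI impI)
          fix m :: nat assume "m < 3"
          then have "m = 0 \<or> m = 1 \<or> m = 2" by auto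
          then show "\<not> ?W x y m" using nw0 nw1 nw2 ne ov True by auto
        qed
        then show ?thesis using ne ov True w3 by (intro gdist_eqI) (auto simp: Dst_def)
      next
        case False
        have "\<forall>m<2. \<not> ?W x y m"
        proof (intro allI impI)
          fix m :: nat assume "m < 2"
          then have "m = 0 \<or> m = 1" by auto
          then show "\<not> ?W x y m" using nw0 nw1 ne ov by auto
        qed
        then show ?thesis using ne ov False w2 by (intro gdist_eqI) (auto simp: Dst_def)
      qed
    qed
  qed
qed


definition MD where "MD x y \<longleftrightarrow> (\<forall>w\<in>ZV n k. ZE n k x w \<longrightarrow> Dst y w \<le> Dst x y)"

lemma md_iff: "x \<in> ZV n k \<Longrightarrow> y \<in> ZV n k \<Longrightarrow> max_distant (ZV n k) (ZE n k) x y \<longleftrightarrow> MD x y"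
  unfolding max_distant_def MD_def using gdist_D by simp

lemma sing_ZV: "i < n \<Longrightarrow> ({i}, j) \<in> LB n k \<Longrightarrow> ({i}, j) \<in> ZV n k"
proof -
  assume i: "i < n" "({i}, j) \<in> LB n k"
  have "{i} \<noteq> {..<n}"
  proof
    assume "{i} = {..<n}"
    then have "0 \<in> {i}" "1 \<in> {i}" using n3 by auto
    then show False by simp
  qed
  then show ?thesis using i ZV_iff by auto
qed

lemma MD_of_cond: assumes x: "x \<in> ZV n k" and y: "y \<in> ZV n k" and ne: "x \<noteq> y" and c: "cond x y"
  shows "MD x y"
  unfolding MD_def
proof (intro ballI impI)
  fix w assume w: "w \<in> ZV n k" "ZE n k x w"
  have wx: "fst x \<inter> fst w = {}" using w by (simp add: ZE_iff)
  have xs: "fst x \<subseteq> {..<n}" "fst x \<noteq> {}" "fst x \<noteq> {..<n}" using x ZV_iff LB_sub by auto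
  have ys: "fst y \<subseteq> {..<n}" "fst y \<noteq> {}" "fst y \<noteq> {..<n}" using y ZV_iff LB_sub by auto
  have ws: "fst w \<subseteq> {..<n}" using w ZV_iff LB_sub by auto
  show "Dst y w \<le> Dst x y"
  proof (cases "fst x = fst y")
    case True
    then have "Dst x y = 2" using ne xs unfolding Dst_def by auto
    moreover have "Dst y w \<le> 1" using wx True unfolding Dst_def by auto
    ultimately show ?thesis by simp
  next
    case False
    then have ov: "fst x \<inter> fst y \<noteq> {}" "\<not> fst x \<subseteq> fst y" using c unfolding cond_def by auto
    then have "Dst x y \<ge> 2" using ne unfolding Dst_def by auto
    moreover have "Dst y w \<le> 2"
    proof -
      have "fst y \<union> fst w \<noteq> {..<n}" using ov wx xs by auto
      then show ?thesis unfolding Dst_def by auto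
    qed
    ultimately show ?thesis by simp
  qed
qed

lemma cond_sym: "cond x y \<Longrightarrow> cond y x"
  unfolding cond_def by auto

lemma not_MD_sub: assumes x: "x \<in> ZV n k" and y: "y \<in> ZV n k" and sub: "fst x \<subset> fst y"
  shows "\<not> MD x y"
proof -
  have xs: "fst x \<subseteq> {..<n}" "fst x \<noteq> {}" "fst x \<noteq> {..<n}" using x ZV_iff LB_sub by auto
  have ys: "fst y \<subseteq> {..<n}" "fst y \<noteq> {}" "fst y \<noteq> {..<n}" using y ZV_iff LB_sub by auto
  define w where "w = ({..<n} - fst x, 1::nat)"
  have w: "w \<in> ZV n k" unfolding w_def using compl_ZV[OF x] .
  have e: "ZE n k x w" using x w unfolding ZE_iff w_def by auto
  have "x \<noteq> y" using sub by auto
  then have d1: "Dst x y = 2" using sub xs ys unfolding Dst_def by auto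
  have yw: "y \<noteq> w" "fst y \<inter> fst w \<noteq> {}" "fst y \<union> fst w = {..<n}"
    using sub xs ys unfolding w_def by auto
  then have "Dst y w = 3" unfolding Dst_def by auto
  then show ?thesis using w e d1 unfolding MD_def by force
qed

lemma not_MD_disj: assumes x: "x \<in> ZV n k" and y: "y \<in> ZV n k" and d: "fst x \<inter> fst y = {}"
  shows "\<not> MD x y"
proof -
  have ys: "fst y \<subseteq> {..<n}" "fst y \<noteq> {}" using y ZV_iff LB_sub by auto
  then obtain i where i: "i \<in> fst y" by auto
  then have "i < n" using ys by auto
  obtain j' where j': "({i},j') \<in> LB n k" "j' \<noteq> snd y" using chain2[OF \<open>i<n\<close>] by blast
  define w where "w = ({i}, j')"
  have w: "w \<in> ZV n k" unfolding w_def using sing_ZV[OF \<open>i<n\<close> j'(1)] .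
  have e: "ZE n k x w" using x w d i unfolding ZE_iff w_def by auto
  have "x \<noteq> y" using d ys by auto
  then have d1: "Dst x y = 1" using d unfolding Dst_def by auto
  have "y \<noteq> w" using j' unfolding w_def by auto
  moreover have "fst y \<inter> fst w \<noteq> {}" using i unfolding w_def by auto
  ultimately have "Dst y w \<ge> 2" unfolding Dst_def by auto
  then show ?thesis using w e d1 unfolding MD_def by force
qed

lemma MMD_iff: assumes x: "x \<in> ZV n k" and y: "y \<in> ZV n k" and ne: "x \<noteq> y"
  shows "mutually_max_distant (ZV n k) (ZE n k) x y \<longleftrightarrow> cond x y"
proof -
  have "MD x y \<and> MD y x \<longleftrightarrow> cond x y"
  proof
    assume "cond x y" then show "MD x y \<and> MD y x"
      using MD_of_cond x y ne cond_sym by metis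
  next
    assume m: "MD x y \<and> MD y x"
    show "cond x y"
    proof (rule ccontr)
      assume nc: "\<not> cond x y"
      show False
      proof (cases "fst x \<inter> fst y = {}")
        case True then show False using not_MD_disj[OF x y] m by blast
      next
        case False
        then have "fst x \<subset> fst y \<or> fst y \<subset> fst x" using nc unfolding cond_def by auto
        then show False using not_MD_sub[OF x y] not_MD_sub[OF y x] m by blast
      qed
    qed
  qed
  then show ?thesis unfolding mutually_max_distant_def using md_iff[OF x y] md_iff[OF y x] by simp
qed

lemma has_partner: assumes x: "x \<in> ZV n k" shows "\<exists>y\<in>ZV n k. y \<noteq> x \<and> cond x y"
proof -
  have xs: "fst x \<subseteq> {..<n}" "fst x \<noteq> {}" "fst x \<noteq> {..<n}" using x ZV_iff LB_sub by auto
  obtain i where i: "i \<in> fst x" using xs by auto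
  show ?thesis
  proof (cases "fst x = {i}")
    case True
    have "i < n" using i xs by auto
    obtain j' where j': "({i},j') \<in> LB n k" "j' \<noteq> snd x" using chain2[OF \<open>i<n\<close>] by blast
    have "({i},j') \<in> ZV n k" using sing_ZV[OF \<open>i<n\<close> j'(1)] .
    moreover have "({i},j') \<noteq> x" using j' by auto
    moreover have "cond x ({i},j')" using True unfolding cond_def by simp
    ultimately show ?thesis by blast
  next
    case False
    then obtain i' where i': "i' \<in> fst x" "i' \<noteq> i" using i by auto
    obtain j where j: "j < n" "j \<notin> fst x" using xs by auto
    define y where "y = ((fst x - {i'}) \<union> {j}, 1::nat)"
    have "(fst x - {i'}) \<union> {j} \<subseteq> {..<n}" using xs j by auto
    then have yL: "y \<in> LB n k" unfolding y_def by (rule LB_mem)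
    have "i' \<notin> fst y" "i' < n" using i' j xs unfolding y_def by auto
    then have "fst y \<noteq> {..<n}" by auto
    then have yZ: "y \<in> ZV n k" using yL ZV_iff unfolding y_def by auto
    have "j \<in> fst y" unfolding y_def by simp
    then have "y \<noteq> x" using j by auto
    moreover have "cond x y" unfolding cond_def y_def using i i' j by auto
    ultimately show ?thesis using yZ by blast
  qed
qed

lemma main: "boundary (ZV n k) (ZE n k) = ZV n k \<and>
         (\<forall>x y. SSE n k x y \<longleftrightarrow> SR_edge (ZV n k) (ZE n k) x y)"
proof
  show b: "boundary (ZV n k) (ZE n k) = ZV n k"
  proof
    show "boundary (ZV n k) (ZE n k) \<subseteq> ZV n k" unfolding boundary_def by auto
    show "ZV n k \<subseteq> boundary (ZV n k) (ZE n k)"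
    proof
      fix x assume x: "x \<in> ZV n k"
      obtain y where y: "y \<in> ZV n k" "y \<noteq> x" "cond x y" using has_partner[OF x] by blast
      then have "mutually_max_distant (ZV n k) (ZE n k) x y" using MMD_iff x by metis
      then show "x \<in> boundary (ZV n k) (ZE n k)" unfolding boundary_def using x y by blast
    qed
  qed
  show "\<forall>x y. SSE n k x y \<longleftrightarrow> SR_edge (ZV n k) (ZE n k) x y"
    unfolding SR_edge_def b SSE_iff using MMD_iff by blast
qed

end

theorem mainTheorem8:
  fixes n :: nat and k :: "nat set \<Rightarrow> nat"
  assumes "n \<ge> 3"
    and "blowup_ok n k"
    and "\<forall>i<n. card (clsB n k ({i}, 1)) \<ge> 2"
  shows "boundary (ZV n k) (ZE n k) = ZV n k \<and>
         (\<forall>x y. SSE n k x y \<longleftrightarrow> SR_edge (ZV n k) (ZE n k) x y)"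
proof -
  interpret BU n k using assms by unfold_locales auto
  show ?thesis by (rule main)
qed

end
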